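(* Let $Q$ be a good dyadic square or a dyadic segment. Then each of the circular arcs bounding $\widehat{\langle Q\rangle}=\Sigma^{-1}(\langle Q\rangle)\subset S^2$ lies on a circle of (Euclidean) diameter at least $1$. (When $Q$ is a dyadic segment, $\widehat{\langle Q\rangle}$ is itself such an arc.)
   Context: $\Sigma(x,y,z)=(x/(1-z),y/(1-z))$ is stereographic projection from $(0,0,1)$ onto $\mathbb{R}^2$. Dyadic segments: segments of the $x$-axis of $\mathbb{R}^2$ obtained from $[0,4]\times\{0\}$ by repeated bisection (including itself). Dyadic squares: obtained from $[-2,2]^2$ by repeatedly cutting into four congruent quarters; a dyadic square is good if it is contained in $[-3/2,3/2]^2$ and has side length at most $1/2$. $\langle Q\rangle$ denotes the solid segment or square. *)

theory Defs
  imports "HOL-Analysis.Analysis"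
begin

definition north_pole :: "real^3" where
  "north_pole = vector [0, 0, 1]"

definition Sigma :: "real^3 \<Rightarrow> real \<times> real" where
  "Sigma p = (p$1 / (1 - p$3), p$2 / (1 - p$3))"

definition Sigma_preimage :: "(real \<times> real) set \<Rightarrow> (real^3) set" where
  "Sigma_preimage A = {p \<in> sphere 0 1. p \<noteq> north_pole \<and> Sigma p \<in> A}"

definition sq :: "real \<Rightarrow> real \<Rightarrow> real \<Rightarrow> (real \<times> real) set" where
  "sq a b s = {a..a+s} \<times> {b..b+s}"

definition sq_sides :: "real \<Rightarrow> real \<Rightarrow> real \<Rightarrow> (real \<times> real) set set" where
  "sq_sides a b s = {{a..a+s} \<times> {b}, {a..a+s} \<times> {b+s}, {a} \<times> {b..b+s}, {a+s} \<times> {b..b+s}}"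

definition sides :: "(real \<times> real) set \<Rightarrow> (real \<times> real) set set" where
  "sides Q = {E. \<exists>a b s. s > 0 \<and> Q = sq a b s \<and> E \<in> sq_sides a b s}"

text \<open>Dyadic squares: obtained from [-2,2]^2 by k-fold quartering.\<close>
definition dyadic_square :: "(real \<times> real) set \<Rightarrow> bool" where
  "dyadic_square Q \<longleftrightarrow> (\<exists>k i j :: nat. i < 2^k \<and> j < 2^k \<and>
      Q = sq (-2 + real i * 4 / 2^k) (-2 + real j * 4 / 2^k) (4 / 2^k))"

definition good_dyadic_square :: "(real \<times> real) set \<Rightarrow> bool" where
  "good_dyadic_square Q \<longleftrightarrow>
      Q \<subseteq> {-3/2..3/2} \<times> {-3/2..3/2} \<and>
      (\<exists>k i j :: nat. i < 2^k \<and> j < 2^k \<and> (4::real) / 2^k \<le> 1/2 \<and>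
         Q = sq (-2 + real i * 4 / 2^k) (-2 + real j * 4 / 2^k) (4 / 2^k))"

text \<open>Dyadic segments: obtained from [0,4] x {0} by k-fold bisection.\<close>
definition dyadic_segment :: "(real \<times> real) set \<Rightarrow> bool" where
  "dyadic_segment Q \<longleftrightarrow> (\<exists>k i :: nat. i < 2^k \<and>
      Q = {real i * 4 / 2^k .. real (i+1) * 4 / 2^k} \<times> {0})"

definition on_circle_diam_ge :: "(real^3) set \<Rightarrow> real \<Rightarrow> bool" where
  "on_circle_diam_ge A d \<longleftrightarrow> (\<exists>c r n. n \<noteq> 0 \<and> r > 0 \<and> 2 * r \<ge> d \<and>
      A \<subseteq> {p. dist p c = r \<and> inner (p - c) n = 0})"

end

theory Submission imports Defs begin

lemma circle_gen:
  fixes u v w :: real and A :: "(real^3) set"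
  assumes uv: "u^2 + v^2 = 1" and w3: "w^2 \<le> 3"
    and A: "\<And>p. p \<in> A \<Longrightarrow> norm p = 1 \<and> u * p$1 + v * p$2 + w * p$3 = w"
  shows "on_circle_diam_ge A 1"
proof -
  define n :: "real^3" where "n = vector [u, v, w]"
  define k where "k = w / (1 + w^2)"
  define c :: "real^3" where "c = k *\<^sub>R n"
  define r where "r = 1 / sqrt (1 + w^2)"
  have pos: "1 + w^2 > 0" by (simp add: add_pos_nonneg)
  have nn: "inner n n = 1 + w^2" using uv by (simp add: n_def inner_vec_def sum_3 power2_eq_square)
  have n0: "n \<noteq> 0" using nn pos by auto
  have r0: "r > 0" using pos by (simp add: r_def)
  have "sqrt (1 + w^2) \<le> sqrt 4" using w3 by (intro real_sqrt_le_mono) simp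
  then have "sqrt (1 + w^2) \<le> 2" by simp
  then have r1: "2 * r \<ge> 1" using pos by (simp add: r_def field_simps)
  have "A \<subseteq> {p. dist p c = r \<and> inner (p - c) n = 0}"
  proof
    fix p assume "p \<in> A"
    then have np: "norm p = 1" and pl: "u * p$1 + v * p$2 + w * p$3 = w" using A by auto
    have pp: "inner p p = 1" using np by (simp add: norm_eq_sqrt_inner)
    have pn: "inner p n = w" using pl by (simp add: n_def inner_vec_def sum_3 mult.commute)
    have kk: "k * (1 + w^2) = w" using pos by (simp add: k_def)
    have i: "inner (p - c) n = 0"
      using pn nn kk by (simp add: c_def inner_diff_left)
    have "inner (p - c) (p - c) = 1 - 2 * k * w + k * k * (1 + w^2)"
      using pp pn nn by (simp add: c_def inner_diff_left inner_diff_right inner_commute algebra_simps)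
    also have "\<dots> = 1 - k * w"
    proof -
      have "k * k * (1 + w^2) = k * w" by (metis kk mult.assoc)
      then show ?thesis by linarith
    qed
    also have "\<dots> = 1 / (1 + w^2)" using pos by (simp add: k_def field_simps power2_eq_square)
    finally have "dist p c = r"
      by (simp add: dist_norm norm_eq_sqrt_inner r_def real_sqrt_divide)
    with i show "p \<in> {p. dist p c = r \<and> inner (p - c) n = 0}" by simp
  qed
  then show ?thesis unfolding on_circle_diam_ge_def using n0 r0 r1 by blast
qed

lemma p3_ne:
  assumes "p \<in> sphere (0::real^3) 1" "p \<noteq> north_pole"
  shows "p$3 \<noteq> 1"
proof
  assume h: "p$3 = 1"
  have "inner p p = 1" using assms(1) by (simp add: norm_eq_sqrt_inner)
  then have "p$1^2 + p$2^2 + p$3^2 = 1" by (simp add: inner_vec_def sum_3 power2_eq_square)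
  with h have "p$1^2 + p$2^2 = 0" by simp
  then have "p$1 = 0" "p$2 = 0" by (simp_all add: sum_power2_eq_zero_iff)
  with h have "p = north_pole" by (simp add: vec_eq_iff forall_3 north_pole_def)
  with assms(2) show False by simp
qed

lemma vert:
  assumes "E \<subseteq> {a} \<times> UNIV" "a^2 \<le> 3"
  shows "on_circle_diam_ge (Sigma_preimage E) 1"
proof (rule circle_gen[where u=1 and v=0 and w=a])
  fix p assume p: "p \<in> Sigma_preimage E"
  then have s: "p \<in> sphere 0 1" "p \<noteq> north_pole" "Sigma p \<in> E" by (auto simp: Sigma_preimage_def)
  then have "p$1 / (1 - p$3) = a" using assms(1) by (auto simp: Sigma_def)
  moreover have "1 - p$3 \<noteq> 0" using p3_ne[OF s(1,2)] by simp
  ultimately have "p$1 = a * (1 - p$3)" by (simp add: field_simps)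
  then show "norm p = 1 \<and> 1 * p$1 + 0 * p$2 + a * p$3 = a" using s(1) by (simp add: algebra_simps)
qed (use assms in auto)

lemma horiz:
  assumes "E \<subseteq> UNIV \<times> {b}" "b^2 \<le> 3"
  shows "on_circle_diam_ge (Sigma_preimage E) 1"
proof (rule circle_gen[where u=0 and v=1 and w=b])
  fix p assume p: "p \<in> Sigma_preimage E"
  then have s: "p \<in> sphere 0 1" "p \<noteq> north_pole" "Sigma p \<in> E" by (auto simp: Sigma_preimage_def)
  then have "p$2 / (1 - p$3) = b" using assms(1) by (auto simp: Sigma_def)
  moreover have "1 - p$3 \<noteq> 0" using p3_ne[OF s(1,2)] by simp
  ultimately have "p$2 = b * (1 - p$3)" by (simp add: field_simps)
  then show "norm p = 1 \<and> 0 * p$1 + 1 * p$2 + b * p$3 = b" using s(1) by (simp add: algebra_simps)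
qed (use assms in auto)

lemma sq_le: "(x::real) \<in> {-3/2..3/2} \<Longrightarrow> x^2 \<le> 3"
proof -
  assume "x \<in> {-3/2..3/2}"
  then have "0 \<le> (3/2 - x) * (3/2 + x)" by (intro mult_nonneg_nonneg) auto
  then show ?thesis by (simp add: power2_eq_square algebra_simps)
qed

theorem lemma3p1:
  fixes Q E :: "(real \<times> real) set"
  assumes "(good_dyadic_square Q \<and> E \<in> sides Q) \<or> (dyadic_segment Q \<and> E = Q)"
  shows "on_circle_diam_ge (Sigma_preimage E) 1"
  using assms
proof
  assume "dyadic_segment Q \<and> E = Q"
  then have "E \<subseteq> UNIV \<times> {0}" by (auto simp: dyadic_segment_def)
  then show ?thesis by (rule horiz) simp
next
  assume h: "good_dyadic_square Q \<and> E \<in> sides Q"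
  then have sub: "Q \<subseteq> {-3/2..3/2} \<times> {-3/2..3/2}" by (simp add: good_dyadic_square_def)
  from h obtain a b s where s: "s > 0" "Q = sq a b s" "E \<in> sq_sides a b s"
    by (auto simp: sides_def)
  have "(a, b) \<in> Q" "(a+s, b+s) \<in> Q" using s by (auto simp: sq_def)
  then have a: "a^2 \<le> 3" "(a+s)^2 \<le> 3" "b^2 \<le> 3" "(b+s)^2 \<le> 3"
    using sub by (auto intro!: sq_le)
  from s(3) consider "E = {a..a+s} \<times> {b}" | "E = {a..a+s} \<times> {b+s}" | "E = {a} \<times> {b..b+s}"
    | "E = {a+s} \<times> {b..b+s}" unfolding sq_sides_def by blast
  then show ?thesis
  proof cases
    case 1 then show ?thesis by (intro horiz[OF _ a(3)]) auto
  next
    case 2 then show ?thesis by (intro horiz[OF _ a(4)]) auto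
  next
    case 3 then show ?thesis by (intro vert[OF _ a(1)]) auto
  next
    case 4 then show ?thesis by (intro vert[OF _ a(2)]) auto
  qed
qed

end
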